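(* Let $H$ be any random variable with values in $(0,1)$ with $\mu_{\log}:=E[-\log(1-H)]<\infty$ (no non-lattice assumption). Let $Q_\bullet$ be the Markov chain on $\{1,2,\dots\}$ with transition probabilities $p_{m,n}=\binom{n-1}{m-1}\mu_{n-m,m}$ for $1\le m\le n$ (and $0$ for $n<m$) and initial distribution $P(Q_0=n)=\mu_{n,0}/(n\,\mu_{\log})$, $n\ge1$. Then for every $n\ge1$, $$P(Q_k=n\text{ for some }k\ge0)=\frac{1-\mu_{0,n}}{n\,\mu_{\log}}.$$
   Context: $\mu_{i,j}:=E[H^i(1-H)^j]$. *)

theory Defs
  imports "HOL-Probability.Probability"
begin

definition mom :: "'a measure \<Rightarrow> ('a \<Rightarrow> real) \<Rightarrow> nat \<Rightarrow> nat \<Rightarrow> real" where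
  "mom M H i j = integral\<^sup>L M (\<lambda>x. H x ^ i * (1 - H x) ^ j)"

definition mu_log :: "'a measure \<Rightarrow> ('a \<Rightarrow> real) \<Rightarrow> real" where
  "mu_log M H = integral\<^sup>L M (\<lambda>x. - ln (1 - H x))"

definition trans_p :: "'a measure \<Rightarrow> ('a \<Rightarrow> real) \<Rightarrow> nat \<Rightarrow> nat \<Rightarrow> real" where
  "trans_p M H m n = (if 1 \<le> m \<and> m \<le> n then real ((n - 1) choose (m - 1)) * mom M H (n - m) m else 0)"

definition init_p :: "'a measure \<Rightarrow> ('a \<Rightarrow> real) \<Rightarrow> nat \<Rightarrow> real" where
  "init_p M H n = (if 1 \<le> n then mom M H n 0 / (real n * mu_log M H) else 0)"

end

theory Submission
  imports Defs
begin

lemma series_aux: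
  fixes g v :: "nat \<Rightarrow> real"
  assumes g0: "\<And>j. 0 \<le> g j" and gs: "g sums a"
    and v0: "v 0 = g 0" and vS: "\<And>j. v (Suc j) = g (Suc j) + p * v j"
    and p0: "0 \<le> p" and p1: "p < 1"
  shows "v sums (a / (1 - p))"
proof -
  have vnn: "0 \<le> v j" for j
    by (induction j) (use g0 p0 v0 vS in auto)
  have rec: "(\<Sum>k\<le>Suc n. v k) = (\<Sum>k\<le>Suc n. g k) + p * (\<Sum>k\<le>n. v k)" for n
  proof (induction n)
    case 0 then show ?case by (simp add: v0 vS)
  next
    case (Suc n)
    have "(\<Sum>k\<le>Suc (Suc n). v k) = (\<Sum>k\<le>Suc n. v k) + v (Suc (Suc n))" by simp
    also have "\<dots> = (\<Sum>k\<le>Suc n. g k) + p * (\<Sum>k\<le>n. v k) + (g (Suc (Suc n)) + p * v (Suc n))"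
      using Suc vS by simp
    also have "\<dots> = (\<Sum>k\<le>Suc (Suc n). g k) + p * (\<Sum>k\<le>Suc n. v k)"
      by (simp add: algebra_simps)
    finally show ?case .
  qed
  have gle: "(\<Sum>k\<le>n. g k) \<le> a" for n
    using sum_le_suminf[of g "{..n}"] gs g0 by (auto simp: sums_iff)
  have a0: "0 \<le> a" using gle[of 0] g0[of 0] by simp
  have bnd: "(\<Sum>k\<le>n. v k) \<le> a / (1 - p)" for n
  proof (induction n)
    case 0
    have "a \<le> a / (1 - p)" using a0 p0 p1 by (simp add: field_simps mult_left_le)
    then show ?case using gle[of 0] v0 by simp
  next
    case (Suc n)
    have "(\<Sum>k\<le>Suc n. v k) \<le> a + p * (a / (1 - p))"
      using rec[of n] gle[of "Suc n"] mult_left_mono[OF Suc p0] by linarith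
    also have "\<dots> = a / (1 - p)" using p1 by (simp add: field_simps)
    finally show ?case .
  qed
  have sv: "summable v" by (rule bounded_imp_summable[OF vnn bnd])
  then have s1: "v sums suminf v" by (simp add: summable_sums)
  then have "(\<lambda>j. v (Suc j)) sums (suminf v - v 0)" by (simp add: sums_Suc_iff)
  moreover have "(\<lambda>j. v (Suc j)) sums ((a - g 0) + p * suminf v)"
    unfolding vS by (intro sums_add sums_mult s1) (use gs in \<open>simp add: sums_Suc_iff\<close>)
  ultimately have "suminf v - v 0 = (a - g 0) + p * suminf v" by (rule sums_unique2)
  then have "suminf v = a / (1 - p)" using v0 p1 by (simp add: field_simps)
  then show ?thesis using s1 by simp
qed

lemma binom_coeff_aux:
  assumes "1 \<le> m" "m \<le> n"
  shows "real ((n - 1) choose (m - 1)) / real m = real (n choose m) / real n"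
proof -
  have "Suc (n - 1) * ((n - 1) choose (m - 1)) = (Suc (n - 1) choose Suc (m - 1)) * Suc (m - 1)"
    by (rule Suc_times_binomial_eq)
  then have "n * ((n - 1) choose (m - 1)) = (n choose m) * m" using assms by simp
  then have "real n * real ((n - 1) choose (m - 1)) = real (n choose m) * real m"
    by (metis of_nat_mult)
  then show ?thesis using assms by (simp add: field_simps)
qed

lemma binom_moments:
  assumes P: "prob_space M" and Hm: "H \<in> borel_measurable M"
    and Hb: "\<forall>x\<in>space M. 0 < H x \<and> H x < 1" and n: "1 \<le> n"
  shows "mom M H n 0 / real n + (\<Sum>m\<in>{1..<n}. real ((n-1) choose (m-1)) * mom M H (n-m) m / real m)
           = (1 - mom M H 0 n) / real n"
proof -
  interpret prob_space M by (rule P)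
  have int: "integrable M (\<lambda>x. H x ^ i * (1 - H x) ^ j)" for i j
  proof (rule integrable_const_bound[where B=1])
    show "AE x in M. norm (H x ^ i * (1 - H x) ^ j) \<le> 1"
    proof (rule AE_I2)
      fix x assume "x \<in> space M"
      then have "0 < H x" "H x < 1" using Hb by auto
      then show "norm (H x ^ i * (1 - H x) ^ j) \<le> 1"
        by (simp add: abs_mult mult_le_one power_le_one)
    qed
    show "(\<lambda>x. H x ^ i * (1 - H x) ^ j) \<in> borel_measurable M" using Hm by measurable
  qed
  have sum1: "(\<Sum>m\<le>n. real (n choose m) * mom M H (n-m) m) = 1"
  proof -
    have "(\<Sum>m\<le>n. real (n choose m) * mom M H (n-m) m)
        = integral\<^sup>L M (\<lambda>x. \<Sum>m\<le>n. real (n choose m) * (H x ^ (n-m) * (1 - H x) ^ m))"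
    proof -
      have "integral\<^sup>L M (\<lambda>x. \<Sum>m\<le>n. real (n choose m) * (H x ^ (n-m) * (1 - H x) ^ m))
          = (\<Sum>m\<le>n. integral\<^sup>L M (\<lambda>x. real (n choose m) * (H x ^ (n-m) * (1 - H x) ^ m)))"
        by (rule Bochner_Integration.integral_sum) (use int in auto)
      then show ?thesis unfolding mom_def by simp
    qed
    also have "\<dots> = integral\<^sup>L M (\<lambda>x. 1)"
    proof (rule Bochner_Integration.integral_cong[OF refl])
      fix x assume "x \<in> space M"
      have "((1 - H x) + H x) ^ n = (\<Sum>m\<le>n. real (n choose m) * (1 - H x) ^ m * H x ^ (n - m))"
        by (rule binomial_ring)
      then show "(\<Sum>m\<le>n. real (n choose m) * (H x ^ (n-m) * (1 - H x) ^ m)) = 1"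
        by (simp add: algebra_simps)
    qed
    also have "\<dots> = 1" by (simp add: prob_space)
    finally show ?thesis .
  qed
  have split: "{..n} = insert 0 (insert n {1..<n})" using n by auto
  have "(\<Sum>m\<le>n. real (n choose m) * mom M H (n-m) m)
      = mom M H n 0 + (mom M H 0 n + (\<Sum>m\<in>{1..<n}. real (n choose m) * mom M H (n-m) m))"
    unfolding split using n by (subst sum.insert; auto)+
  then have S: "(\<Sum>m\<in>{1..<n}. real (n choose m) * mom M H (n-m) m) = 1 - mom M H n 0 - mom M H 0 n"
    using sum1 by linarith
  have "(\<Sum>m\<in>{1..<n}. real ((n-1) choose (m-1)) * mom M H (n-m) m / real m)
      = (\<Sum>m\<in>{1..<n}. real (n choose m) * mom M H (n-m) m / real n)"
  proof (rule sum.cong[OF refl])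
    fix m assume "m \<in> {1..<n}"
    then have "real ((n - 1) choose (m - 1)) / real m = real (n choose m) / real n"
      by (intro binom_coeff_aux) auto
    then show "real ((n-1) choose (m-1)) * mom M H (n-m) m / real m
             = real (n choose m) * mom M H (n-m) m / real n"
      by (metis times_divide_eq_left mult.commute)
  qed
  also have "\<dots> = (1 - mom M H n 0 - mom M H 0 n) / real n"
    using S by (metis (no_types) sum_divide_distrib)
  finally show ?thesis by (simp add: diff_divide_distrib add_divide_distrib)
qed

lemma mom0_bounds:
  assumes P: "prob_space M" and Hm: "H \<in> borel_measurable M"
    and Hb: "\<forall>x\<in>space M. 0 < H x \<and> H x < 1" and m: "1 \<le> m"
  shows "0 \<le> mom M H 0 m" "mom M H 0 m < 1"
proof -
  interpret prob_space M by (rule P)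
  have int: "integrable M (\<lambda>x. (1 - H x) ^ m)"
  proof (rule integrable_const_bound[where B=1])
    show "AE x in M. norm ((1 - H x) ^ m) \<le> 1"
    proof (rule AE_I2)
      fix x assume "x \<in> space M"
      then have "0 < H x" "H x < 1" using Hb by auto
      then show "norm ((1 - H x) ^ m) \<le> 1"
        by (simp add: power_le_one)
    qed
    show "(\<lambda>x. (1 - H x) ^ m) \<in> borel_measurable M" using Hm by measurable
  qed
  show "0 \<le> mom M H 0 m" unfolding mom_def
    by (rule integral_nonneg_AE) (rule AE_I2, use Hb in auto)
  show "mom M H 0 m < 1"
  proof (rule ccontr)
    assume "\<not> mom M H 0 m < 1"
    have i1: "integrable M (\<lambda>x. 1 - (1 - H x) ^ m)" using int by simp
    have "integral\<^sup>L M (\<lambda>x. 1 - (1 - H x) ^ m) = 1 - mom M H 0 m"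
      unfolding mom_def using int by (simp add: Bochner_Integration.integral_diff prob_space)
    moreover have "0 \<le> integral\<^sup>L M (\<lambda>x. 1 - (1 - H x) ^ m)"
      by (rule integral_nonneg_AE) (rule AE_I2, use Hb in \<open>auto simp: power_le_one\<close>)
    ultimately have "integral\<^sup>L M (\<lambda>x. 1 - (1 - H x) ^ m) = 0" using \<open>\<not> mom M H 0 m < 1\<close> by simp
    then have "AE x in M. 1 - (1 - H x) ^ m = 0"
      using integral_nonneg_eq_0_iff_AE[OF i1] by (simp add: AE_I2 Hb power_le_one less_imp_le)
    moreover have "AE x in M. 1 - (1 - H x) ^ m \<noteq> 0"
    proof (rule AE_I2)
      fix x assume "x \<in> space M"
      then have "0 < 1 - H x" "1 - H x < 1" using Hb by auto
      then have "(1 - H x) ^ Suc (m - 1) < 1" by (rule power_Suc_less_one)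
      then show "1 - (1 - H x) ^ m \<noteq> 0" using m by simp
    qed
    ultimately have "AE x in M. False" by eventually_elim simp
    then show False by simp
  qed
qed

lemma PiE_differ:
  assumes "ns \<in> PiE {..k} A" "ns' \<in> PiE {..k} B" "ns \<noteq> ns'"
  shows "\<exists>i\<le>k. ns i \<noteq> ns' i"
proof (rule ccontr)
  assume "\<not> (\<exists>i\<le>k. ns i \<noteq> ns' i)"
  note nd = this
  have "ns i = ns' i" for i
  proof (cases "i \<le> k")
    case True then show ?thesis using nd by blast
  next
    case False
    then have "i \<notin> {..k}" by simp
    then show ?thesis using PiE_arb[OF assms(1)] PiE_arb[OF assms(2)] by metis
  qed
  then show False using assms(3) by auto
qed

theorem mainTheorem12:
  fixes M :: "'a measure" and H :: "'a \<Rightarrow> real"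
    and N :: "'b measure" and Q :: "nat \<Rightarrow> 'b \<Rightarrow> nat"
  assumes "prob_space M"
    and "H \<in> borel_measurable M"
    and "\<forall>x\<in>space M. 0 < H x \<and> H x < 1"
    and "integrable M (\<lambda>x. - ln (1 - H x))"
    and "prob_space N"
    and "\<forall>k. Q k \<in> measurable N (count_space UNIV)"
    and "\<forall>k. \<forall>\<omega>\<in>space N. 1 \<le> Q k \<omega>"
    and "\<forall>k (ns :: nat \<Rightarrow> nat).
           measure N {\<omega> \<in> space N. \<forall>i\<le>k. Q i \<omega> = ns i}
             = init_p M H (ns 0) * (\<Prod>i<k. trans_p M H (ns i) (ns (Suc i)))"
    and "1 \<le> n"
  shows "measure N {\<omega> \<in> space N. \<exists>k. Q k \<omega> = n}
           = (1 - mom M H 0 n) / (real n * mu_log M H)"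
proof -
  interpret N: prob_space N by fact
  have Qm[measurable]: "Q k \<in> measurable N (count_space UNIV)" for k using assms(6) by blast
  have Q1: "\<omega> \<in> space N \<Longrightarrow> 1 \<le> Q k \<omega>" for k \<omega> using assms(7) by blast
  define tp where "tp = trans_p M H"
  define cyl where "cyl k ns = {\<omega> \<in> space N. \<forall>i\<le>k. Q i \<omega> = ns i}" for k ns
  define w where "w k ns = init_p M H (ns 0) * (\<Prod>i<k. tp (ns i) (ns (Suc i)))" for k ns
  have cylm: "cyl k ns \<in> sets N" for k ns unfolding cyl_def by measurable
  have hyp: "measure N (cyl k ns) = w k ns" for k ns
    using assms(8) unfolding cyl_def w_def tp_def by blast
  define X where "X = (SIGMA k:UNIV. {ns \<in> PiE {..Suc k} (\<lambda>_. UNIV :: nat set). ns (Suc k) < ns k})"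
  have cX: "countable X" unfolding X_def
  proof (rule countable_SIGMA)
    fix k :: nat
    show "countable {ns \<in> PiE {..Suc k} (\<lambda>_. UNIV :: nat set). ns (Suc k) < ns k}"
      by (rule countable_subset[OF _ countable_PiE[of "{..Suc k}" "\<lambda>_. UNIV :: nat set"]]) auto
  qed simp
  have null: "AE \<omega> in N. \<omega> \<notin> cyl (Suc k) ns" if "ns (Suc k) < ns k" for k ns
  proof -
    have "tp (ns k) (ns (Suc k)) = 0" using that unfolding tp_def trans_p_def by auto
    then have "measure N (cyl (Suc k) ns) = 0" unfolding hyp w_def by simp
    then have "cyl (Suc k) ns \<in> null_sets N" using cylm by (simp add: N.emeasure_eq_measure null_setsI)
    then show ?thesis by (rule AE_not_in)
  qed
  have "AE \<omega> in N. \<forall>y\<in>X. \<omega> \<notin> cyl (Suc (fst y)) (snd y)"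
    by (rule AE_ball_countable'[OF _ cX]) (auto simp: X_def intro: null)
  moreover have "AE \<omega> in N. \<omega> \<in> space N" by simp
  ultimately have mono1: "AE \<omega> in N. \<forall>k. Q k \<omega> \<le> Q (Suc k) \<omega>"
  proof eventually_elim
    case (elim \<omega>)
    show ?case
    proof (rule allI, rule ccontr)
      fix k assume a: "\<not> Q k \<omega> \<le> Q (Suc k) \<omega>"
      let ?ns = "restrict (\<lambda>i. Q i \<omega>) {..Suc k}"
      have "(k, ?ns) \<in> X" using a unfolding X_def by auto
      moreover have "\<omega> \<in> cyl (Suc k) ?ns" using elim unfolding cyl_def by auto
      ultimately show False using elim(1) by force
    qed
  qed
  have mono: "AE \<omega> in N. \<forall>i j. i \<le> j \<longrightarrow> Q i \<omega> \<le> Q j \<omega>"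
    using mono1
  proof eventually_elim
    case (elim \<omega>)
    show ?case using lift_Suc_mono_le[of "\<lambda>k. Q k \<omega>"] elim by blast
  qed

  define v where "v j m = measure N {\<omega> \<in> space N. Q j \<omega> = m}" for j m
  have markov: "measure N {\<omega> \<in> space N. Q j \<omega> = m \<and> Q (Suc j) \<omega> = n'} = v j m * tp m n'" for j m n'
  proof -
    define S where "S = {ns \<in> PiE {..j} (\<lambda>_. {1..m}). ns j = m}"
    define f where "f ns = ns(Suc j := n')" for ns :: "nat \<Rightarrow> nat"
    have finS: "finite S" unfolding S_def by (rule finite_subset[OF _ finite_PiE[of "{..j}" "\<lambda>_. {1..m}"]]) auto
    have dif: "\<exists>i\<le>j. ns i \<noteq> ns' i" if "ns \<in> S" "ns' \<in> S" "ns \<noteq> ns'" for ns ns'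
      using that unfolding S_def by (intro PiE_differ) auto
    have disj1: "disjoint_family_on (\<lambda>ns. cyl j ns) S"
      unfolding disjoint_family_on_def
    proof (intro ballI impI)
      fix ns ns' assume "ns \<in> S" "ns' \<in> S" "ns \<noteq> ns'"
      then obtain i where "i \<le> j" "ns i \<noteq> ns' i" using dif by blast
      then show "cyl j ns \<inter> cyl j ns' = {}" unfolding cyl_def by auto
    qed
    have disj2: "disjoint_family_on (\<lambda>ns. cyl (Suc j) (f ns)) S"
      unfolding disjoint_family_on_def
    proof (intro ballI impI)
      fix ns ns' assume "ns \<in> S" "ns' \<in> S" "ns \<noteq> ns'"
      then obtain i where "i \<le> j" "ns i \<noteq> ns' i" using dif by blast
      have fi: "f ns i = ns i" "f ns' i = ns' i" using \<open>i \<le> j\<close> by (auto simp: f_def)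
      { fix \<omega> assume "\<omega> \<in> cyl (Suc j) (f ns)" "\<omega> \<in> cyl (Suc j) (f ns')"
        then have "Q i \<omega> = f ns i" "Q i \<omega> = f ns' i" using \<open>i \<le> j\<close> unfolding cyl_def by auto
        then have False using fi \<open>ns i \<noteq> ns' i\<close> by simp }
      then show "cyl (Suc j) (f ns) \<inter> cyl (Suc j) (f ns') = {}" by blast
    qed
    have e1: "measure N {\<omega> \<in> space N. Q j \<omega> = m} = measure N (\<Union>ns\<in>S. cyl j ns)"
    proof (rule N.finite_measure_eq_AE)
      show "AE \<omega> in N. (\<omega> \<in> {\<omega> \<in> space N. Q j \<omega> = m}) = (\<omega> \<in> (\<Union>ns\<in>S. cyl j ns))"
        using mono
      proof eventually_elim
        case (elim \<omega>)
        show ?case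
        proof
          assume a: "\<omega> \<in> {\<omega> \<in> space N. Q j \<omega> = m}"
          let ?ns = "restrict (\<lambda>i. Q i \<omega>) {..j}"
          have "?ns \<in> S" unfolding S_def using a elim Q1 by (auto simp: PiE_iff)
          moreover have "\<omega> \<in> cyl j ?ns" using a unfolding cyl_def by auto
          ultimately show "\<omega> \<in> (\<Union>ns\<in>S. cyl j ns)" by blast
        next
          assume "\<omega> \<in> (\<Union>ns\<in>S. cyl j ns)"
          then show "\<omega> \<in> {\<omega> \<in> space N. Q j \<omega> = m}" unfolding cyl_def S_def by auto
        qed
      qed
    next
      show "{\<omega> \<in> space N. Q j \<omega> = m} \<in> sets N" by measurable
    next
      show "(\<Union>ns\<in>S. cyl j ns) \<in> sets N" using finS cylm by (intro sets.finite_UN) auto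
    qed
    have e2: "measure N {\<omega> \<in> space N. Q j \<omega> = m \<and> Q (Suc j) \<omega> = n'} = measure N (\<Union>ns\<in>S. cyl (Suc j) (f ns))"
    proof (rule N.finite_measure_eq_AE)
      show "AE \<omega> in N. (\<omega> \<in> {\<omega> \<in> space N. Q j \<omega> = m \<and> Q (Suc j) \<omega> = n'}) = (\<omega> \<in> (\<Union>ns\<in>S. cyl (Suc j) (f ns)))"
        using mono
      proof eventually_elim
        case (elim \<omega>)
        show ?case
        proof
          assume a: "\<omega> \<in> {\<omega> \<in> space N. Q j \<omega> = m \<and> Q (Suc j) \<omega> = n'}"
          let ?ns = "restrict (\<lambda>i. Q i \<omega>) {..j}"
          have "?ns \<in> S" unfolding S_def using a elim Q1 by (auto simp: PiE_iff)
          moreover have "\<omega> \<in> cyl (Suc j) (f ?ns)" using a unfolding cyl_def f_def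
            by (auto simp: le_Suc_eq)
          ultimately show "\<omega> \<in> (\<Union>ns\<in>S. cyl (Suc j) (f ns))" by blast
        next
          assume "\<omega> \<in> (\<Union>ns\<in>S. cyl (Suc j) (f ns))"
          then show "\<omega> \<in> {\<omega> \<in> space N. Q j \<omega> = m \<and> Q (Suc j) \<omega> = n'}" unfolding cyl_def S_def f_def
            by auto
        qed
      qed
    next
      show "{\<omega> \<in> space N. Q j \<omega> = m \<and> Q (Suc j) \<omega> = n'} \<in> sets N" by measurable
    next
      show "(\<Union>ns\<in>S. cyl (Suc j) (f ns)) \<in> sets N" using finS cylm by (intro sets.finite_UN) auto
    qed
    have wf: "w (Suc j) (f ns) = w j ns * tp m n'" if "ns \<in> S" for ns
    proof -
      have "(\<Prod>i<j. tp (f ns i) (f ns (Suc i))) = (\<Prod>i<j. tp (ns i) (ns (Suc i)))"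
        by (rule prod.cong) (auto simp: f_def)
      then show ?thesis using that unfolding w_def S_def by (simp add: f_def)
    qed
    have "measure N {\<omega> \<in> space N. Q j \<omega> = m \<and> Q (Suc j) \<omega> = n'} = (\<Sum>ns\<in>S. w (Suc j) (f ns))"
      unfolding e2 using finS disj2 cylm by (subst N.finite_measure_finite_Union) (auto simp: hyp)
    also have "\<dots> = (\<Sum>ns\<in>S. w j ns) * tp m n'" by (simp add: wf sum_distrib_right)
    also have "(\<Sum>ns\<in>S. w j ns) = v j m"
      unfolding v_def e1 using finS disj1 cylm by (subst N.finite_measure_finite_Union) (auto simp: hyp)
    finally show ?thesis .
  qed
  have split: "measure N {\<omega> \<in> space N. Q (Suc j) \<omega> = n' \<and> Q j \<omega> < c} = (\<Sum>m\<in>{1..<c}. v j m * tp m n')" for j c n'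
  proof -
    have "{\<omega> \<in> space N. Q (Suc j) \<omega> = n' \<and> Q j \<omega> < c}
        = (\<Union>m\<in>{1..<c}. {\<omega> \<in> space N. Q j \<omega> = m \<and> Q (Suc j) \<omega> = n'})"
    proof (intro set_eqI iffI)
      fix \<omega> assume a: "\<omega> \<in> {\<omega> \<in> space N. Q (Suc j) \<omega> = n' \<and> Q j \<omega> < c}"
      then have "Q j \<omega> \<in> {1..<c}" using Q1 by auto
      then show "\<omega> \<in> (\<Union>m\<in>{1..<c}. {\<omega> \<in> space N. Q j \<omega> = m \<and> Q (Suc j) \<omega> = n'})"
        using a by blast
    next
      fix \<omega> assume "\<omega> \<in> (\<Union>m\<in>{1..<c}. {\<omega> \<in> space N. Q j \<omega> = m \<and> Q (Suc j) \<omega> = n'})"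
      then show "\<omega> \<in> {\<omega> \<in> space N. Q (Suc j) \<omega> = n' \<and> Q j \<omega> < c}" by auto
    qed
    moreover have mset: "{\<omega> \<in> space N. Q j \<omega> = m \<and> Q (Suc j) \<omega> = n'} \<in> sets N" for m by measurable
    moreover have "measure N (\<Union>m\<in>{1..<c}. {\<omega> \<in> space N. Q j \<omega> = m \<and> Q (Suc j) \<omega> = n'})
        = (\<Sum>m\<in>{1..<c}. measure N {\<omega> \<in> space N. Q j \<omega> = m \<and> Q (Suc j) \<omega> = n'})"
    proof (rule N.finite_measure_finite_Union)
      show "disjoint_family_on (\<lambda>m. {\<omega> \<in> space N. Q j \<omega> = m \<and> Q (Suc j) \<omega> = n'}) {1..<c}"
        unfolding disjoint_family_on_def by blast
    qed (use mset in auto)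
    ultimately show ?thesis by (simp add: markov)
  qed
  have vstep: "v (Suc j) n' = (\<Sum>m\<in>{1..<n'}. v j m * tp m n') + tp n' n' * v j n'" if "1 \<le> n'" for j n'
  proof -
    have "v (Suc j) n' = measure N {\<omega> \<in> space N. Q (Suc j) \<omega> = n' \<and> Q j \<omega> < Suc n'}"
      unfolding v_def
    proof (rule N.finite_measure_eq_AE)
      show "AE \<omega> in N. (\<omega> \<in> {\<omega> \<in> space N. Q (Suc j) \<omega> = n'}) = (\<omega> \<in> {\<omega> \<in> space N. Q (Suc j) \<omega> = n' \<and> Q j \<omega> < Suc n'})"
        using mono
      proof eventually_elim
        case (elim \<omega>)
        then have "Q j \<omega> \<le> Q (Suc j) \<omega>" using elim[rule_format, of j "Suc j"] by simp
        then show ?case by (cases "Q (Suc j) \<omega> = n'") (simp_all add: less_Suc_eq_le)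
      qed
    next
      show "{\<omega> \<in> space N. Q (Suc j) \<omega> = n'} \<in> sets N" by measurable
    next
      show "{\<omega> \<in> space N. Q (Suc j) \<omega> = n' \<and> Q j \<omega> < Suc n'} \<in> sets N" by measurable
    qed
    also have "\<dots> = (\<Sum>m\<in>{1..<Suc n'}. v j m * tp m n')" by (rule split)
    also have "{1..<Suc n'} = insert n' {1..<n'}" using that by auto
    finally show ?thesis by (simp add: algebra_simps)
  qed
  define G where "G j n' = {\<omega> \<in> space N. Q j \<omega> = n' \<and> (\<forall>i<j. Q i \<omega> \<noteq> n')}" for j n'
  define a where "a n' = measure N {\<omega> \<in> space N. \<exists>k. Q k \<omega> = n'}" for n'
  have Gm: "G j n' \<in> sets N" for j n' unfolding G_def by measurable
  have v0: "v 0 n' = init_p M H n'" for n'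
  proof -
    have "{\<omega> \<in> space N. Q 0 \<omega> = n'} = cyl 0 (\<lambda>_. n')" unfolding cyl_def by auto
    then show ?thesis unfolding v_def by (simp add: hyp w_def)
  qed
  have G0: "measure N (G 0 n') = v 0 n'" for n' unfolding G_def v_def by simp
  have GS: "measure N (G (Suc j) n') = (\<Sum>m\<in>{1..<n'}. v j m * tp m n')" for j n'
  proof -
    have "measure N (G (Suc j) n') = measure N {\<omega> \<in> space N. Q (Suc j) \<omega> = n' \<and> Q j \<omega> < n'}"
    proof (rule N.finite_measure_eq_AE)
      show "AE \<omega> in N. (\<omega> \<in> G (Suc j) n') = (\<omega> \<in> {\<omega> \<in> space N. Q (Suc j) \<omega> = n' \<and> Q j \<omega> < n'})"
        using mono
      proof eventually_elim
        case (elim \<omega>)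
        show ?case
        proof
          assume g: "\<omega> \<in> G (Suc j) n'"
          have "Q j \<omega> \<le> Q (Suc j) \<omega>" using elim[rule_format, of j "Suc j"] by simp
          then show "\<omega> \<in> {\<omega> \<in> space N. Q (Suc j) \<omega> = n' \<and> Q j \<omega> < n'}"
            using g unfolding G_def by auto
        next
          assume a: "\<omega> \<in> {\<omega> \<in> space N. Q (Suc j) \<omega> = n' \<and> Q j \<omega> < n'}"
          { fix i assume "i < Suc j"
            then have "Q i \<omega> \<le> Q j \<omega>" using elim[rule_format, of i j] by simp
            then have "Q i \<omega> \<noteq> n'" using a by auto }
          then show "\<omega> \<in> G (Suc j) n'" using a unfolding G_def by auto
        qed
      qed
    next
      show "G (Suc j) n' \<in> sets N" by (rule Gm)
    next
      show "{\<omega> \<in> space N. Q (Suc j) \<omega> = n' \<and> Q j \<omega> < n'} \<in> sets N" by measurable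
    qed
    then show ?thesis by (simp add: split)
  qed
  have Gsums: "(\<lambda>j. measure N (G j n')) sums a n'" for n'
  proof -
    have "(\<lambda>j. measure N (G j n')) sums measure N (\<Union>j. G j n')"
    proof (rule N.finite_measure_UNION)
      show "range (\<lambda>j. G j n') \<subseteq> sets N" using Gm by auto
      show "disjoint_family (\<lambda>j. G j n')"
      proof (unfold disjoint_family_on_def, intro ballI impI)
        fix i j :: nat assume "i \<noteq> j"
        then consider "i < j" | "j < i" by linarith
        then show "G i n' \<inter> G j n' = {}" unfolding G_def by cases auto
      qed
    qed
    moreover have "(\<Union>j. G j n') = {\<omega> \<in> space N. \<exists>k. Q k \<omega> = n'}"
    proof
      show "(\<Union>j. G j n') \<subseteq> {\<omega> \<in> space N. \<exists>k. Q k \<omega> = n'}" unfolding G_def by auto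
      show "{\<omega> \<in> space N. \<exists>k. Q k \<omega> = n'} \<subseteq> (\<Union>j. G j n')"
      proof
        fix \<omega> assume "\<omega> \<in> {\<omega> \<in> space N. \<exists>k. Q k \<omega> = n'}"
        then obtain k where k: "\<omega> \<in> space N" "Q k \<omega> = n'" by auto
        let ?j = "LEAST k. Q k \<omega> = n'"
        have "Q ?j \<omega> = n'" by (rule LeastI[of "\<lambda>k. Q k \<omega> = n'"]) (rule k(2))
        moreover have "\<forall>i<?j. Q i \<omega> \<noteq> n'" using not_less_Least[of _ "\<lambda>k. Q k \<omega> = n'"] by blast
        ultimately show "\<omega> \<in> (\<Union>j. G j n')" unfolding G_def using k by blast
      qed
    qed
    ultimately show ?thesis unfolding a_def by simp
  qed
  have tpnn: "tp m m = mom M H 0 m" if "1 \<le> m" for m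
    using that unfolding tp_def trans_p_def by simp
  have pb: "0 \<le> tp m m" "tp m m < 1" if "1 \<le> m" for m
    using mom0_bounds[OF assms(1-3) that] tpnn[OF that] by auto
  have vsums: "(\<lambda>j. v j m) sums (a m / (1 - tp m m))" if "1 \<le> m" for m
  proof (rule series_aux[where g = "\<lambda>j. measure N (G j m)"])
    show "(\<lambda>j. measure N (G j m)) sums a m" by (rule Gsums)
    show "v 0 m = measure N (G 0 m)" by (simp add: G0)
    show "v (Suc j) m = measure N (G (Suc j) m) + tp m m * v j m" for j
      using vstep[OF that] GS by simp
  qed (use pb[OF that] in auto)
  have recur: "a n' = init_p M H n' + (\<Sum>m\<in>{1..<n'}. (a m / (1 - tp m m)) * tp m n')" if "1 \<le> n'" for n'
  proof -
    have "(\<lambda>j. measure N (G (Suc j) n')) sums (a n' - measure N (G 0 n'))"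
      using Gsums[of n'] sums_Suc_iff[of "\<lambda>j. measure N (G j n')" "a n' - measure N (G 0 n')"] by simp
    moreover have "(\<lambda>j. measure N (G (Suc j) n')) sums (\<Sum>m\<in>{1..<n'}. (a m / (1 - tp m m)) * tp m n')"
      unfolding GS by (intro sums_sum sums_mult2 vsums) auto
    ultimately have "a n' - measure N (G 0 n') = (\<Sum>m\<in>{1..<n'}. (a m / (1 - tp m m)) * tp m n')"
      by (rule sums_unique2)
    then show ?thesis using G0 v0 by simp
  qed
  have main: "a n' = (1 - mom M H 0 n') / (real n' * mu_log M H)" if "1 \<le> n'" for n'
    using that
  proof (induction n' rule: less_induct)
    case (less n')
    define L where "L = mu_log M H"
    have t: "(a m / (1 - tp m m)) * tp m n' = real ((n'-1) choose (m-1)) * mom M H (n'-m) m / real m / L"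
      if "m \<in> {1..<n'}" for m
    proof -
      have m1: "1 \<le> m" "m < n'" using that by auto
      have am: "a m = (1 - mom M H 0 m) / (real m * L)" using less.IH m1 unfolding L_def by auto
      have nz: "1 - mom M H 0 m \<noteq> 0" using pb(2)[OF m1(1)] tpnn[OF m1(1)] by simp
      have tpm: "tp m n' = real ((n'-1) choose (m-1)) * mom M H (n'-m) m" using m1 unfolding tp_def trans_p_def by simp
      show ?thesis
      proof (cases "L = 0")
        case True then show ?thesis using am by simp
      next
        case False
        have q: "a m / (1 - tp m m) = 1 / (real m * L)" using am nz tpnn[OF m1(1)] by simp
        have "(a m / (1 - tp m m)) * tp m n' = 1 / (real m * L) * tp m n'" by (simp only: q)
        also have "\<dots> = real ((n'-1) choose (m-1)) * mom M H (n'-m) m / real m / L"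
          unfolding tpm by (simp add: divide_divide_eq_left mult.commute)
        finally show ?thesis .
      qed
    qed
    have "a n' = init_p M H n' + (\<Sum>m\<in>{1..<n'}. real ((n'-1) choose (m-1)) * mom M H (n'-m) m / real m / L)"
      using recur[OF less.prems] t by simp
    also have "\<dots> = (mom M H n' 0 / real n' + (\<Sum>m\<in>{1..<n'}. real ((n'-1) choose (m-1)) * mom M H (n'-m) m / real m)) / L"
      using less.prems unfolding init_p_def L_def
      by (simp add: sum_divide_distrib add_divide_distrib divide_divide_eq_left)
    also have "\<dots> = (1 - mom M H 0 n') / real n' / L"
      using binom_moments[OF assms(1-3) less.prems] by simp
    finally show ?case unfolding L_def by (simp add: divide_divide_eq_left)
  qed
  show ?thesis using main[OF assms(9)] unfolding a_def .
qed

end
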